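(* Let $G=(0^{a_1}1^{a_2}\cdots0^{a_{n-1}}1^{a_n})$ and $G'=(0^{b_1}1^{b_2}\cdots0^{b_{m-1}}1^{b_m})$ be connected threshold graphs, where all $a_i,b_j$ are positive integers and $n,m$ are even. Suppose $G$ and $G'$ have the same adjacency spectrum (with multiplicities). Then $n=m$, and $\gamma^{\mathbf a}_n(l)=\gamma^{\mathbf b}_n(l)$ for all $l=0,1,\dots,n$.
   Context: A threshold graph is built from a single vertex $v_1$ by repeatedly adding a vertex that is either isolated or dominating (adjacent to all previous vertices). Recording $v_1$ as $0$, and each later vertex as $0$ (isolated) or $1$ (dominating), a connected threshold graph on at least 2 vertices has binary sequence $0^{a_1}1^{a_2}\cdots0^{a_{n-1}}1^{a_n}$ with $n$ even and all $a_i\ge1$; it is denoted $(0^{a_1}1^{a_2}\cdots0^{a_{n-1}}1^{a_n})$. For $1\le l\le n$, $I_{n,l}$ is the set of strictly increasing sequences $(t_1,\dots,t_l)$ in $\{1,\dots,n\}$ with $t_i\equiv n+i-l\pmod2$ for all $i$. For a sequence $\mathbf a=(a_1,a_2,\dots)$ of positive integers, $\gamma^{\mathbf a}_n(l)=\sum_{(t_1,\dots,t_l)\in I_{n,l}}a_{t_1}\cdots a_{t_l}$ for $1\le l\le n$, and $\gamma^{\mathbf a}_n(0)=1$. *)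

theory Defs
  imports "Jordan_Normal_Form.Jordan_Normal_Form"
begin

(* Binary creation sequence 0^{a_1} 1^{a_2} ... 0^{a_{n-1}} 1^{a_n}; exponents a 1, ..., a n
   (the function a is indexed from 1).  True = 1 = dominating, False = 0 = isolated. *)
definition thr_seq :: "(nat \<Rightarrow> nat) \<Rightarrow> nat \<Rightarrow> bool list" where
  "thr_seq a n = concat (map (\<lambda>i. replicate (a i) (even i)) [1..<n+1])"

(* Adjacency relation of the threshold graph with binary sequence s on vertices 0..<length s:
   for i < j, vertices i and j are adjacent iff vertex j was added as a dominating vertex. *)
definition thr_adj :: "bool list \<Rightarrow> nat \<Rightarrow> nat \<Rightarrow> bool" where
  "thr_adj s i j = ((i < j \<and> s ! j) \<or> (j < i \<and> s ! i))"

definition thr_adj_mat :: "bool list \<Rightarrow> real mat" where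
  "thr_adj_mat s = mat (length s) (length s) (\<lambda>(i, j). if thr_adj s i j then 1 else 0)"

definition spec_mult :: "real mat \<Rightarrow> real \<Rightarrow> nat" where
  "spec_mult A x = order x (char_poly A)"

definition cospectral :: "real mat \<Rightarrow> real mat \<Rightarrow> bool" where
  "cospectral A B \<longleftrightarrow> (\<forall>x. spec_mult A x = spec_mult B x)"

(* I_{n,l}: strictly increasing sequences (t_1,...,t_l) in {1..n} with t_i \<equiv> n+i-l (mod 2);
   represented as lists, list position k (0-based) corresponds to i = k+1. *)
definition I_set :: "nat \<Rightarrow> nat \<Rightarrow> nat list set" where
  "I_set n l = {ts. length ts = l \<and> sorted_wrt (<) ts \<and> set ts \<subseteq> {1..n} \<and>
       (\<forall>k<l. ts ! k mod 2 = (n + (k + 1) - l) mod 2)}"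

definition gamma :: "(nat \<Rightarrow> nat) \<Rightarrow> nat \<Rightarrow> nat \<Rightarrow> nat" where
  "gamma a n l = (if l = 0 then 1 else (\<Sum>ts\<in>I_set n l. \<Prod>k<l. a (ts ! k)))"

end

theory Submission
  imports Defs
begin


lemma sym_real_eig:
  fixes A :: "real mat"
  assumes A: "A \<in> carrier_mat N N" and sym: "\<And>i j. i < N \<Longrightarrow> j < N \<Longrightarrow> A $$ (i,j) = A $$ (j,i)"
    and ev: "eigenvalue (map_mat complex_of_real A) z"
  shows "Im z = 0"
proof -
  let ?C = "map_mat complex_of_real A"
  from ev obtain v where v: "v \<in> carrier_vec N" "v \<noteq> 0\<^sub>v N" "?C *\<^sub>v v = z \<cdot>\<^sub>v v"
    unfolding eigenvalue_def eigenvector_def using A by auto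
  have row: "(\<Sum>j<N. of_real (A $$ (i,j)) * v $ j) = z * v $ i" if i: "i < N" for i
  proof -
    have "(?C *\<^sub>v v) $ i = (z \<cdot>\<^sub>v v) $ i" using v(3) by simp
    also have "(?C *\<^sub>v v) $ i = (\<Sum>j<N. of_real (A $$ (i,j)) * v $ j)"
      using i v(1) A by (auto simp: scalar_prod_def lessThan_atLeast0 mult.commute)
    also have "(z \<cdot>\<^sub>v v) $ i = z * v $ i" using i v by auto
    finally show ?thesis .
  qed
  define S where "S = (\<Sum>i<N. cnj (v $ i) * (\<Sum>j<N. of_real (A $$ (i,j)) * v $ j))"
  define T where "T = (\<Sum>i<N. cnj (v $ i) * v $ i)"
  have ST: "S = z * T" unfolding S_def T_def by (auto simp: row sum_distrib_left intro!: sum.cong)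
  have "cnj S = (\<Sum>i<N. (\<Sum>j<N. of_real (A $$ (i,j)) * cnj (v $ j) * v $ i))"
    unfolding S_def by (simp add: sum_distrib_left mult_ac)
  also have "\<dots> = (\<Sum>j<N. (\<Sum>i<N. of_real (A $$ (i,j)) * cnj (v $ j) * v $ i))"
    by (rule sum.swap)
  also have "\<dots> = S" unfolding S_def
    by (auto simp: sum_distrib_left mult_ac sym intro!: sum.cong)
  finally have cS: "cnj S = S" .
  have Treal: "T = of_real (\<Sum>i<N. (cmod (v $ i))^2)"
    unfolding T_def by (simp add: complex_norm_square[symmetric] mult.commute del: of_real_power)
  obtain k where k: "k < N" "v $ k \<noteq> 0" using v by (metis eq_vecI carrier_vecD index_zero_vec)
  have "(\<Sum>i<N. (cmod (v $ i))^2) > 0"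
  proof -
    have "(\<Sum>i<N. (cmod (v $ i))^2) \<ge> (cmod (v $ k))^2"
      by (rule member_le_sum) (use k in auto)
    moreover have "(cmod (v $ k))^2 > 0" using k by simp
    ultimately show ?thesis by linarith
  qed
  hence "Im T = 0" "Re T > 0" using Treal by auto
  moreover have "Im S = 0" using cS by (metis cnj.simps(2) neg_equal_zero)
  ultimately show ?thesis using ST by simp   
qed

interpretation rpoly: map_poly_inj_idom_hom "of_real :: real \<Rightarrow> complex" ..

lemma sym_real_split:
  fixes A :: "real mat"
  assumes A: "A \<in> carrier_mat N N" and sym: "\<And>i j. i < N \<Longrightarrow> j < N \<Longrightarrow> A $$ (i,j) = A $$ (j,i)"
  shows "\<exists>rs. char_poly A = (\<Prod>r\<leftarrow>rs. [:-r, 1:])"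
proof -
  let ?C = "map_mat complex_of_real A"
  have C: "?C \<in> carrier_mat N N" using A by auto
  obtain as where as: "char_poly ?C = (\<Prod>a\<leftarrow>as. [:-a, 1:])"
    using char_poly_factorized[OF C] by auto
  have real: "Im a = 0" if "a \<in> set as" for a
  proof -
    have "poly (char_poly ?C) a = 0" unfolding as using that
      by (auto simp: poly_prod_list prod_list_zero_iff)
    hence "eigenvalue ?C a" using eigenvalue_root_char_poly[OF C] by auto
    thus ?thesis using sym_real_eig[OF A sym] by blast
  qed
  have h: "char_poly ?C = map_poly complex_of_real (char_poly A)"
    by (rule of_real_hom.char_poly_hom[OF A])
  have "map_poly complex_of_real (char_poly A) = char_poly ?C"
    using h by (rule HOL.sym)
  also have "\<dots> = map_poly complex_of_real (\<Prod>r\<leftarrow>map Re as. [:-r, 1:])"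
  proof -
    have "map (\<lambda>a. [:-a, 1:]) as = map (\<lambda>a. map_poly complex_of_real [:-Re a, 1:]) as"
      using real by (intro map_cong) (auto simp: complex_eq_iff)
    hence "char_poly ?C = prod_list (map (\<lambda>a. map_poly complex_of_real [:-Re a, 1:]) as)"
      unfolding as by (rule arg_cong[where f=prod_list])
    thus ?thesis by (simp only: rpoly.hom_prod_list map_map o_def)
  qed
  finally show ?thesis by (intro exI[of _ "map Re as"]) (rule rpoly.injectivity)
qed

lemma order_linprod: "order x (\<Prod>r\<leftarrow>rs. [:-r, 1:]) = count (mset rs) (x::real)"
proof (induct rs)
  case Nil
  then show ?case by (simp add: order_0I)
next
  case (Cons r rs)
  have nz: "(\<Prod>r\<leftarrow>rs. [:-r, 1:]) \<noteq> (0::real poly)"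
    by (auto simp: prod_list_zero_iff)
  have "order x ([:-r, 1:] * (\<Prod>r\<leftarrow>rs. [:-r, 1:])) = order x [:-r,1:] + order x (\<Prod>r\<leftarrow>rs. [:-r, 1:])"
  proof (rule order_mult)
    have "[:-r,1:] \<noteq> (0::real poly)" by simp
    thus "[:-r,1:] * (\<Prod>r\<leftarrow>rs. [:-r, 1:]) \<noteq> 0" using nz by (simp only: mult_eq_0_iff) simp
  qed
  moreover have "order x [:-r,1:] = (if x = r then 1 else 0)"
    using order_power_n_n[of r 1] by (auto simp: order_0I)
  ultimately show ?case using Cons by auto
qed

lemma linprod_eq:
  assumes "\<And>x. order x (\<Prod>r\<leftarrow>rs. [:-r, 1:]) = order x (\<Prod>r\<leftarrow>ss. [:-r, 1:])"
  shows "(\<Prod>r\<leftarrow>rs. [:-r, 1:]) = (\<Prod>r\<leftarrow>(ss::real list). [:-r, 1:])"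
proof -
  have "mset rs = mset ss" using assms by (auto simp: order_linprod intro: multiset_eqI)
  hence "mset (map (\<lambda>r. [:-r, 1:]) rs) = mset (map (\<lambda>r. [:-r, 1:]) ss)" by simp
  hence "prod_mset (mset (map (\<lambda>r. [:-r, 1:]) rs)) = prod_mset (mset (map (\<lambda>r. [:-r, 1:]) ss))" by simp
  thus ?thesis by (simp only: prod_mset_prod_list)
qed


lemma det_border:
  fixes K :: "'a :: idom mat" and u d :: 'a
  assumes K: "K \<in> carrier_mat N N"
  shows "det (four_block_mat K (mat N 1 (\<lambda>_. -u)) (mat 1 N (\<lambda>_. -u)) (mat 1 1 (\<lambda>_. d)))
       = (d + u) * det K - u * det (K + mat N N (\<lambda>_. u))"
proof -
  define K' where "K' = four_block_mat K (mat N 1 (\<lambda>_. -u)) (mat 1 N (\<lambda>_. -u)) (mat 1 1 (\<lambda>_. d))"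
  define B where "B = four_block_mat K (mat N 1 (\<lambda>_. -u)) (mat 1 N (\<lambda>_. -u)) (mat 1 1 (\<lambda>_. -u))"
  have K'c: "K' \<in> carrier_mat (N+1) (N+1)" unfolding K'_def using K by auto
  have Bc: "B \<in> carrier_mat (N+1) (N+1)" unfolding B_def using K by auto
  have del: "mat_delete K' N j = mat_delete B N j" for j
    unfolding mat_delete_def K'_def B_def using K by (intro eq_matI) auto
  have delN: "mat_delete K' N N = K"
    unfolding mat_delete_def K'_def using K by (intro eq_matI) auto
  have L1: "det K' = (\<Sum>j<N+1. K' $$ (N,j) * cofactor K' N j)"
    by (rule laplace_expansion_row[OF K'c]) simp
  have S1: "(\<Sum>j<N. K' $$ (N,j) * cofactor K' N j) = (\<Sum>j<N. B $$ (N,j) * cofactor B N j)"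
    unfolding cofactor_def del using K by (intro sum.cong) (auto simp: K'_def B_def)
  have KNN: "K' $$ (N,N) = d" using K by (simp add: K'_def)
  have 1: "det K' = (\<Sum>j<N. B $$ (N,j) * cofactor B N j) + d * det K"
    using L1 S1 KNN by (simp add: cofactor_def delN)
  have L2: "det B = (\<Sum>j<N+1. B $$ (N,j) * cofactor B N j)"
    by (rule laplace_expansion_row[OF Bc]) simp
  have BNN: "B $$ (N,N) = -u" using K by (simp add: B_def)
  have 2: "det B = (\<Sum>j<N. B $$ (N,j) * cofactor B N j) - u * det K"
    using L2 BNN by (simp add: cofactor_def del[symmetric] delN)
  define C where "C = four_block_mat (K + mat N N (\<lambda>_. u)) (mat N 1 (\<lambda>_. -u)) (0\<^sub>m 1 N) (mat 1 1 (\<lambda>_. -u))"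
  define E :: "'a mat" where "E = four_block_mat (1\<^sub>m N) (0\<^sub>m N 1) (mat 1 N (\<lambda>_. 1)) (1\<^sub>m 1)"
  have "C * E = four_block_mat ((K + mat N N (\<lambda>_. u)) * 1\<^sub>m N + mat N 1 (\<lambda>_. -u) * mat 1 N (\<lambda>_. 1))
      ((K + mat N N (\<lambda>_. u)) * 0\<^sub>m N 1 + mat N 1 (\<lambda>_. -u) * 1\<^sub>m 1)
      (0\<^sub>m 1 N * 1\<^sub>m N + mat 1 1 (\<lambda>_. -u) * mat 1 N (\<lambda>_. 1))
      (0\<^sub>m 1 N * 0\<^sub>m N 1 + mat 1 1 (\<lambda>_. -u) * 1\<^sub>m 1)"
    unfolding C_def E_def by (rule mult_four_block_mat) (use K in auto)
  also have "\<dots> = B" unfolding B_def using K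
    by (intro cong_four_block_mat eq_matI) (auto simp: scalar_prod_def)
  finally have CE: "C * E = B" .
  have "det C = det (K + mat N N (\<lambda>_. u)) * det (mat 1 1 (\<lambda>_. -u))"
    unfolding C_def by (rule det_four_block_mat_lower_left_zero) (use K in auto)
  also have "det (mat 1 1 (\<lambda>_. -u)) = -u" by (subst det_single) auto
  finally have dC: "det C = - u * det (K + mat N N (\<lambda>_. u))" by simp
  have "det E = det (1\<^sub>m N) * det (1\<^sub>m 1 :: 'a mat)"
    unfolding E_def by (rule det_four_block_mat_upper_right_zero) auto
  hence dE: "det E = 1" by simp
  have "det B = det C * det E" unfolding CE[symmetric]
    by (rule det_mult) (use K in \<open>auto simp: C_def E_def\<close>)
  with dC dE have 3: "det B = - u * det (K + mat N N (\<lambda>_. u))" by simp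
  show ?thesis unfolding K'_def[symmetric] using 1 2 3 by (simp add: algebra_simps)
qed


definition Km :: "bool list \<Rightarrow> real \<Rightarrow> real poly mat" where
  "Km s t = mat (length s) (length s)
     (\<lambda>(i,j). (if i = j then [:0,1:] else 0) - [:(if thr_adj s i j then 1 else 0) + t:])"

definition stp :: "bool \<Rightarrow> real poly \<times> real poly \<Rightarrow> real poly \<times> real poly" where
  "stp c pw = (if c then ([:0,1:] * fst pw - snd pw, fst pw + [:2,1:] * snd pw)
               else ([:0,1:] * fst pw, fst pw + [:0,1:] * snd pw))"

definition PW :: "bool list \<Rightarrow> real poly \<times> real poly" where
  "PW s = foldl (\<lambda>pw c. stp c pw) (1, 0) s"

lemma PW_snoc: "PW (s @ [c]) = stp c (PW s)" by (simp add: PW_def)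
lemma PW_Nil: "PW [] = (1, 0)" by (simp add: PW_def)

lemma Km_snoc:
  "Km (s @ [c]) t = four_block_mat (Km s t) (mat (length s) 1 (\<lambda>_. - [:(if c then 1 else 0) + t:]))
      (mat 1 (length s) (\<lambda>_. - [:(if c then 1 else 0) + t:])) (mat 1 1 (\<lambda>_. [:0,1:] - [:t:]))"
  by (rule eq_matI) (auto simp: Km_def thr_adj_def nth_append)

lemma Km_shift: "Km s t + mat (length s) (length s) (\<lambda>_. [:c + t:]) = Km s (- c)"
  by (rule eq_matI) (auto simp: Km_def)

lemma det_Km: "det (Km s t) = fst (PW s) - [:t:] * snd (PW s)"
proof (induct s arbitrary: t rule: rev_induct)
  case Nil
  then show ?case by (simp add: Km_def PW_Nil)
next
  case (snoc c s)
  let ?cc = "(if c then 1 else 0) :: real"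
  have K: "Km s t \<in> carrier_mat (length s) (length s)" by (simp add: Km_def)
  have "det (Km (s @ [c]) t) = ([:0,1:] - [:t:] + [:?cc + t:]) * det (Km s t)
       - [:?cc + t:] * det (Km s t + mat (length s) (length s) (\<lambda>_. [:?cc + t:]))"
    unfolding Km_snoc by (rule det_border[OF K])
  also have "Km s t + mat (length s) (length s) (\<lambda>_. [:?cc + t:]) = Km s (- ?cc)" by (rule Km_shift)
  finally have D: "det (Km (s @ [c]) t) = ([:0,1:] - [:t:] + [:?cc + t:]) * (fst (PW s) - [:t:] * snd (PW s))
       - [:?cc + t:] * (fst (PW s) - [:-?cc:] * snd (PW s))" using snoc by simp
  have e1: "[:?cc + t:] = [:?cc:] + [:t:]" "[:-?cc:] = - [:?cc:]" by auto
  have e2: "[:2,1:] = [:0,1:] + (2::real poly)"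
    by (rule poly_eqI) (auto simp: coeff_pCons numeral_poly split: nat.split)
  show ?case
  proof (cases c)
    case True
    hence cc: "[:?cc:] = 1" by (simp add: one_pCons)
    have G: "Y = X + 2 \<Longrightarrow> (X - T + (1 + T)) * (P - T * W) - (1 + T) * (P - - 1 * W) = (X*P - W) - T*(P + Y*W)"
      for X T P W Y :: "real poly"
      by (simp add: algebra_simps)
    have "det (Km (s @ [c]) t) = ([:0,1:] * fst (PW s) - snd (PW s)) - [:t:] * (fst (PW s) + [:2,1:] * snd (PW s))"
      using D unfolding e1 cc by (simp only: G[OF e2])
    thus ?thesis using True by (simp only: PW_snoc stp_def if_True fst_conv snd_conv)
  next
    case False
    hence cc: "[:?cc:] = 0" by simp
    have G: "(X - T + (0 + T)) * (P - T * W) - (0 + T) * (P - - 0 * W) = X*P - T*(P + X*W)"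
      for X T P W :: "real poly"
      by (simp add: algebra_simps)
    have "det (Km (s @ [c]) t) = [:0,1:] * fst (PW s) - [:t:] * (fst (PW s) + [:0,1:] * snd (PW s))"
      using D unfolding e1 cc by (simp only: G)
    thus ?thesis using False by (simp only: PW_snoc stp_def if_False fst_conv snd_conv)
  qed
qed

lemma charpoly_PW: "char_poly (thr_adj_mat s) = fst (PW s)"
proof -
  have "char_poly (thr_adj_mat s) = det (Km s 0)"
    unfolding char_poly_def char_poly_matrix_def
    by (rule arg_cong[where f=det], rule eq_matI) (auto simp: Km_def thr_adj_mat_def thr_adj_def)
  thus ?thesis by (simp add: det_Km)
qed


abbreviation "XX \<equiv> [:0,1:] :: real poly"

lemma stpF: "fst (stp False pw) = XX * fst pw" "snd (stp False pw) = fst pw + XX * snd pw"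
  by (simp_all add: stp_def)
lemma stpT: "fst (stp True pw) = XX * fst pw - snd pw" "snd (stp True pw) = fst pw + (XX + 2) * snd pw"
proof -
  have e2: "[:2,1:] = XX + (2::real poly)"
    by (rule poly_eqI) (auto simp: coeff_pCons numeral_poly split: nat.split)
  show "fst (stp True pw) = XX * fst pw - snd pw" "snd (stp True pw) = fst pw + (XX + 2) * snd pw"
    by (simp_all only: stp_def if_True fst_conv snd_conv e2)
qed

lemma algF0: "P' = x*P \<Longrightarrow> W' = P + x*W \<Longrightarrow> P' = x^(Suc 0) * P \<and> P' + W' = x^0*(x*(P+W) + of_nat (Suc 0)*P)"
  for x P W P' W' :: "'a::comm_ring_1" by (simp add: algebra_simps)
lemma algF: "P' = x*P \<Longrightarrow> W' = P + x*W \<Longrightarrow> P = x^(Suc r) * P0 \<Longrightarrow> P + W = x^r*(x*S0 + of_nat (Suc r) * P0)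
  \<Longrightarrow> P' = x^(Suc (Suc r)) * P0 \<and> P' + W' = x^(Suc r)*(x*S0 + of_nat (Suc (Suc r))*P0)"
  for x P W P' W' P0 S0 :: "'a::comm_ring_1"
proof -
  assume h: "P' = x*P" "W' = P + x*W" "P = x^(Suc r) * P0" "P + W = x^r*(x*S0 + of_nat (Suc r) * P0)"
  have "P' + W' = x*(P+W) + P" using h(1,2) by (simp add: algebra_simps)
  also have "\<dots> = x*(x^r*(x*S0 + of_nat (Suc r) * P0)) + x^(Suc r) * P0" unfolding h(4) unfolding h(3) ..
  finally have "P' + W' = x^(Suc r)*(x*S0 + of_nat (Suc (Suc r))*P0)" by (simp add: algebra_simps)
  thus ?thesis using h(1,3) by simp
qed
lemma algT0: "P' = x*P - W \<Longrightarrow> W' = P + (x+2)*W \<Longrightarrow> P' + W' = (x+1)^(Suc 0) * (P+W) \<and> P' = (x+1)^0*((x+1)*P - of_nat (Suc 0)*(P+W))"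
  for x P W P' W' :: "'a::comm_ring_1" by (simp add: algebra_simps)
lemma algT: "P' = x*P - W \<Longrightarrow> W' = P + (x+2)*W \<Longrightarrow> P + W = (x+1)^(Suc r) * S0 \<Longrightarrow> P = (x+1)^r*((x+1)*P0 - of_nat (Suc r) * S0)
  \<Longrightarrow> P' + W' = (x+1)^(Suc (Suc r)) * S0 \<and> P' = (x+1)^(Suc r)*((x+1)*P0 - of_nat (Suc (Suc r))*S0)"
  for x P W P' W' P0 S0 :: "'a::comm_ring_1"
proof -
  assume h: "P' = x*P - W" "W' = P + (x+2)*W" "P + W = (x+1)^(Suc r) * S0" "P = (x+1)^r*((x+1)*P0 - of_nat (Suc r) * S0)"
  have 1: "P' + W' = (x+1)*(P+W)" using h(1,2) by (simp add: algebra_simps)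
  have 2: "P' = (x+1)*P - (P+W)" using h(1) by (simp add: algebra_simps)
  have "P' + W' = (x+1)^(Suc (Suc r)) * S0" unfolding 1 h(3) by simp
  moreover have "P' = (x+1)*((x+1)^r*((x+1)*P0 - of_nat (Suc r) * S0)) - (x+1)^(Suc r) * S0"
    unfolding 2 unfolding h(3) unfolding h(4) ..
  hence "P' = (x+1)^(Suc r)*((x+1)*P0 - of_nat (Suc (Suc r))*S0)" by (simp add: algebra_simps)
  ultimately show ?thesis by simp
qed

lemma PW_rep_F: "fst (PW (s @ replicate (Suc r) False)) = XX^(Suc r) * fst (PW s) \<and>
   fst (PW (s @ replicate (Suc r) False)) + snd (PW (s @ replicate (Suc r) False)) =
     XX^r * (XX * (fst (PW s) + snd (PW s)) + of_nat (Suc r) * fst (PW s))"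
proof (induct r)
  case 0
  show ?case unfolding replicate_Suc replicate_0 PW_snoc by (rule algF0[OF stpF])
next
  case (Suc r)
  have e: "s @ replicate (Suc (Suc r)) False = (s @ replicate (Suc r) False) @ [False]"
    by (simp add: replicate_append_same[symmetric])
  show ?case unfolding e PW_snoc by (rule algF[OF stpF Suc[THEN conjunct1] Suc[THEN conjunct2]])
qed

lemma PW_rep_T: "fst (PW (s @ replicate (Suc r) True)) + snd (PW (s @ replicate (Suc r) True)) =
     (XX + 1)^(Suc r) * (fst (PW s) + snd (PW s)) \<and>
   fst (PW (s @ replicate (Suc r) True)) =
     (XX + 1)^r * ((XX + 1) * fst (PW s) - of_nat (Suc r) * (fst (PW s) + snd (PW s)))"
proof (induct r)
  case 0
  show ?case unfolding replicate_Suc replicate_0 PW_snoc by (rule algT0[OF stpT])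
next
  case (Suc r)
  have e: "s @ replicate (Suc (Suc r)) True = (s @ replicate (Suc r) True) @ [True]"
    by (simp add: replicate_append_same[symmetric])
  show ?case unfolding e PW_snoc by (rule algT[OF stpT Suc[THEN conjunct1] Suc[THEN conjunct2]])
qed

lemma thr_seq_Suc: "thr_seq a (Suc k) = thr_seq a k @ replicate (a (Suc k)) (even (Suc k))"
  by (simp add: thr_seq_def)

lemma thr_seq_0: "thr_seq a 0 = []" by (simp add: thr_seq_def)

lemma length_thr_seq: "length (thr_seq a k) = (\<Sum>i=1..k. a i)"
  by (induct k) (auto simp: thr_seq_Suc thr_seq_0)

primrec red :: "(nat \<Rightarrow> nat) \<Rightarrow> nat \<Rightarrow> real poly \<times> real poly" where
  "red a 0 = (1, 1)"
| "red a (Suc k) = (if odd (Suc k)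
      then (XX * fst (red a k), XX * snd (red a k) + of_nat (a (Suc k)) * fst (red a k))
      else ((XX + 1) * fst (red a k) - of_nat (a (Suc k)) * snd (red a k), (XX + 1) * snd (red a k)))"

primrec e0 :: "(nat \<Rightarrow> nat) \<Rightarrow> nat \<Rightarrow> nat" where
  "e0 a 0 = 0" | "e0 a (Suc k) = e0 a k + (if odd (Suc k) then a (Suc k) - 1 else 0)"
primrec e1 :: "(nat \<Rightarrow> nat) \<Rightarrow> nat \<Rightarrow> nat" where
  "e1 a 0 = 0" | "e1 a (Suc k) = e1 a k + (if odd (Suc k) then 0 else a (Suc k) - 1)"

lemma e01_sum: "(\<And>i. 1 \<le> i \<Longrightarrow> i \<le> k \<Longrightarrow> a i > 0) \<Longrightarrow> e0 a k + e1 a k + k = (\<Sum>i=1..k. a i)"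
proof (induct k)
  case (Suc k)
  hence "a (Suc k) > 0" "e0 a k + e1 a k + k = (\<Sum>i=1..k. a i)" by auto
  thus ?case by auto
qed simp

lemma algBF: "P' = x^(Suc r) * P \<Longrightarrow> S' = x^r * (x * S + of_nat (Suc r) * P) \<Longrightarrow> P = M * p \<Longrightarrow> S = M * q
  \<Longrightarrow> P' = (x^r * M) * (x * p) \<and> S' = (x^r * M) * (x * q + of_nat (Suc r) * p)"
  for x P S P' S' M p q :: "'a::comm_ring_1" by (simp add: algebra_simps)
lemma algBT: "S' = y^(Suc r) * S \<Longrightarrow> P' = y^r * (y * P - of_nat (Suc r) * S) \<Longrightarrow> P = M * p \<Longrightarrow> S = M * q
  \<Longrightarrow> P' = (y^r * M) * (y * p - of_nat (Suc r) * q) \<and> S' = (y^r * M) * (y * q)"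
  for y P S P' S' M p q :: "'a::comm_ring_1" by (simp add: algebra_simps)

lemma PW_blocks:
  assumes "\<And>i. 1 \<le> i \<Longrightarrow> i \<le> k \<Longrightarrow> a i > 0"
  shows "fst (PW (thr_seq a k)) = (XX^(e0 a k) * (XX+1)^(e1 a k)) * fst (red a k) \<and>
    fst (PW (thr_seq a k)) + snd (PW (thr_seq a k)) = (XX^(e0 a k) * (XX+1)^(e1 a k)) * snd (red a k)"
  using assms
proof (induct k)
  case 0
  then show ?case by (simp add: thr_seq_0 PW_Nil)
next
  case (Suc k)
  have IH: "fst (PW (thr_seq a k)) = (XX^(e0 a k) * (XX+1)^(e1 a k)) * fst (red a k)"
    "fst (PW (thr_seq a k)) + snd (PW (thr_seq a k)) = (XX^(e0 a k) * (XX+1)^(e1 a k)) * snd (red a k)"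
    using Suc by auto
  obtain r where r: "a (Suc k) = Suc r" using Suc(2)[of "Suc k"] by (cases "a (Suc k)") auto
  show ?case
  proof (cases "odd (Suc k)")
    case True
    have ev: "even (Suc k) = False" using True by simp
    have "fst (PW (thr_seq a (Suc k))) = (XX^r * (XX^(e0 a k) * (XX+1)^(e1 a k))) * (XX * fst (red a k)) \<and>
      fst (PW (thr_seq a (Suc k))) + snd (PW (thr_seq a (Suc k))) =
      (XX^r * (XX^(e0 a k) * (XX+1)^(e1 a k))) * (XX * snd (red a k) + of_nat (Suc r) * fst (red a k))"
      unfolding thr_seq_Suc r ev
      by (intro algBF[OF PW_rep_F[THEN conjunct1] PW_rep_F[THEN conjunct2] IH])
    then show ?thesis using True r by (simp add: power_add algebra_simps)
  next
    case False
    have ev: "even (Suc k) = True" using False by simp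
    have "fst (PW (thr_seq a (Suc k))) = ((XX+1)^r * (XX^(e0 a k) * (XX+1)^(e1 a k))) * ((XX+1) * fst (red a k) - of_nat (Suc r) * snd (red a k)) \<and>
      fst (PW (thr_seq a (Suc k))) + snd (PW (thr_seq a (Suc k))) =
      ((XX+1)^r * (XX^(e0 a k) * (XX+1)^(e1 a k))) * ((XX+1) * snd (red a k))"
      unfolding thr_seq_Suc r ev
      by (intro algBT[OF PW_rep_T[THEN conjunct1] PW_rep_T[THEN conjunct2] IH])
    then show ?thesis using False r by (simp add: power_add algebra_simps)
  qed
qed


fun Ff :: "(nat \<Rightarrow> nat) \<Rightarrow> nat \<Rightarrow> real poly" where
  "Ff a 0 = 1"
| "Ff a (Suc 0) = XX + of_nat (a 1)"
| "Ff a (Suc (Suc k)) = (XX * (XX + 1)) * Ff a k + (if odd k then 1 else -1) * of_nat (a (Suc (Suc k))) * Ff a (Suc k)"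

lemma red_Ff: "k \<ge> 1 \<Longrightarrow> red a k = (if even k then (Ff a k, (XX + 1) * Ff a (k - 1)) else (XX * Ff a (k - 1), Ff a k))"
proof (induct k)
  case 0
  then show ?case by simp
next
  case (Suc k)
  show ?case
  proof (cases k)
    case 0
    then show ?thesis by (simp add: algebra_simps)
  next
    case (Suc j)
    have IH: "red a k = (if even k then (Ff a k, (XX + 1) * Ff a j) else (XX * Ff a j, Ff a k))"
      using Suc.hyps Suc by simp
    have FF: "Ff a (Suc k) = (XX * (XX + 1)) * Ff a j + (if odd j then 1 else -1) * of_nat (a (Suc k)) * Ff a k"
      using Suc by simp
    have kj: "Suc k - 1 = k" "k - 1 = j" using Suc by auto
    show ?thesis
    proof (cases "even k")
      case True
      hence "odd j" using Suc by simp
      then show ?thesis using IH True FF by (simp add: algebra_simps kj)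
    next
      case False
      hence "even j" using Suc by simp
      then show ?thesis using IH False FF by (simp add: algebra_simps kj)
    qed
  qed
qed


definition G :: "(nat \<Rightarrow> nat) \<Rightarrow> nat \<Rightarrow> nat \<Rightarrow> nat" where
  "G a k l = (\<Sum>ts\<in>I_set k l. \<Prod>i<l. a (ts ! i))"

lemma sorted_idx: "sorted_wrt (<) ts \<Longrightarrow> i \<le> j \<Longrightarrow> j < length ts \<Longrightarrow> ts ! i + (j - i) \<le> ts ! j"
proof (induct j)
  case 0
  then show ?case by simp
next
  case (Suc j)
  show ?case
  proof (cases "i = Suc j")
    case True
    then show ?thesis by simp
  next
    case False
    hence "ts ! i + (j - i) \<le> ts ! j" using Suc by auto
    moreover have "ts ! j < ts ! Suc j" using Suc.prems by (auto simp: sorted_wrt_iff_nth_less)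
    ultimately show ?thesis using False Suc.prems by linarith
  qed
qed

lemma I_set_finite: "finite (I_set k l)"
proof -
  have "I_set k l \<subseteq> {ts. set ts \<subseteq> {1..k} \<and> length ts = l}" by (auto simp: I_set_def)
  moreover have "finite {ts. set ts \<subseteq> {1..k} \<and> length ts = l}"
    by (rule finite_lists_length_eq) simp
  ultimately show ?thesis by (rule finite_subset)
qed

lemma I_set_0: "I_set k 0 = {[]}" by (auto simp: I_set_def)

lemma G_0: "G a k 0 = 1" by (simp add: G_def I_set_0)

lemma gamma_G: "gamma a k l = G a k l"
  by (cases "l = 0") (auto simp: gamma_def G_def I_set_0)

lemma I_set_len: assumes "ts \<in> I_set k l" shows "l \<le> k"
proof -
  have "distinct ts" "set ts \<subseteq> {1..k}" "length ts = l" using assms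
    by (auto simp: I_set_def strict_sorted_iff)
  hence "card (set ts) = l" "card (set ts) \<le> card {1..k}"
    by (simp add: distinct_card, intro card_mono, simp_all)
  thus ?thesis by simp
qed

lemma G_big: assumes "k < l" shows "G a k l = 0"
proof -
  have "I_set k l = {}" using I_set_len assms by fastforce
  thus ?thesis by (simp add: G_def)
qed

lemma I_set_1_1: "I_set 1 1 = {[1]}"
proof -
  have "ts = [1]" if "ts \<in> I_set 1 1" for ts
    using that by (cases ts) (auto simp: I_set_def)
  moreover have "[1] \<in> I_set 1 1" by (auto simp: I_set_def)
  ultimately show ?thesis by blast
qed

lemma G_1_1: "G a 1 1 = a 1"
  unfolding G_def I_set_1_1 by simp

lemma I_set_last_bound:
  assumes "ts \<in> I_set k l" "i < l" "ts ! (l - 1) \<le> k'" 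
  shows "l \<le> k' + i"
proof -
  have s: "sorted_wrt (<) ts" "length ts = l" "set ts \<subseteq> {1..k}" using assms by (auto simp: I_set_def)
  have "ts ! i + (l - 1 - i) \<le> ts ! (l - 1)" by (rule sorted_idx) (use s assms in auto)
  moreover have "ts ! i \<in> set ts" using s assms by simp
  hence "ts ! i \<ge> 1" using s by auto
  ultimately show ?thesis using assms by linarith
qed


lemma I_set_split:
  assumes k: "k \<ge> 2" and l: "l \<ge> 1"
  shows "I_set k l = I_set (k - 2) l \<union> (\<lambda>ts. ts @ [k]) ` I_set (k - 1) (l - 1)"
proof (intro equalityI subsetI)
  fix ts assume ts: "ts \<in> I_set k l"
  have s: "sorted_wrt (<) ts" "length ts = l" "set ts \<subseteq> {1..k}"
    and par: "\<And>i. i < l \<Longrightarrow> ts ! i mod 2 = (k + (i + 1) - l) mod 2" using ts by (auto simp: I_set_def)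
  have tsne: "ts \<noteq> []" using s l by auto
  have "last ts \<in> set ts" using tsne by simp
  hence lastk: "last ts \<le> k" using s by auto
  have lastpar: "last ts mod 2 = k mod 2" using par[of "l - 1"] s l tsne by (simp add: last_conv_nth)
  have lastidx: "last ts = ts ! (l - 1)" using s tsne by (simp add: last_conv_nth)
  show "ts \<in> I_set (k - 2) l \<union> (\<lambda>ts. ts @ [k]) ` I_set (k - 1) (l - 1)"
  proof (cases "last ts = k")
    case True
    define us where "us = butlast ts"
    have tsus: "ts = us @ [k]" using True tsne unfolding us_def by (metis append_butlast_last_id)
    have "us \<in> I_set (k - 1) (l - 1)"
    proof -
      have "sorted_wrt (<) us" using s tsus by (simp add: sorted_wrt_append)
      moreover have "length us = l - 1" using s tsus by simp
      moreover have "set us \<subseteq> {1..k - 1}"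
      proof
        fix x assume x: "x \<in> set us"
        hence "x < k" using s(1) tsus by (auto simp: sorted_wrt_append)
        moreover have "x \<ge> 1" using x s(3) tsus by auto
        ultimately show "x \<in> {1..k - 1}" by auto
      qed
      moreover have "us ! i mod 2 = (k - 1 + (i + 1) - (l - 1)) mod 2" if "i < l - 1" for i
      proof -
        have "i < length us" using that s tsus by simp
        hence "us ! i = ts ! i" using tsus by (simp add: nth_append)
        moreover have eq: "k - 1 + (i + 1) - (l - 1) = k + (i + 1) - l" using k l that by linarith
        ultimately show ?thesis using par[of i] that unfolding eq by simp
      qed
      ultimately show ?thesis by (auto simp: I_set_def)
    qed
    thus ?thesis using tsus by blast
  next
    case False
    have "last ts \<noteq> k - 1"
    proof
      assume "last ts = k - 1"
      with lastpar have "(k - 1) mod 2 = k mod 2" by simp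
      thus False using k by (cases k) (auto simp: mod_Suc split: if_splits)
    qed
    hence lt: "last ts \<le> k - 2" using False lastk by linarith
    have "ts \<in> I_set (k - 2) l"
    proof -
      have "set ts \<subseteq> {1..k - 2}"
      proof
        fix x assume x: "x \<in> set ts"
        then obtain i where i: "i < l" "ts ! i = x" using s by (auto simp: in_set_conv_nth)
        have "i \<le> l - 1" using i by simp
        from sorted_idx[OF s(1) this] have "ts ! i \<le> ts ! (l - 1)" using i s by simp
        thus "x \<in> {1..k - 2}" using i lt lastidx x s(3) by auto
      qed
      moreover have "ts ! i mod 2 = (k - 2 + (i + 1) - l) mod 2" if "i < l" for i
      proof -
        have "l \<le> k - 2 + i" by (rule I_set_last_bound[OF ts that]) (use lt lastidx in simp)
        hence eq: "k + (i + 1) - l = (k - 2 + (i + 1) - l) + 2" using k by linarith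
        show ?thesis using par[OF that] unfolding eq by simp
      qed
      ultimately show ?thesis using s by (auto simp: I_set_def)
    qed
    thus ?thesis by blast
  qed
next
  fix ts assume "ts \<in> I_set (k - 2) l \<union> (\<lambda>ts. ts @ [k]) ` I_set (k - 1) (l - 1)"
  then consider "ts \<in> I_set (k - 2) l" | us where "us \<in> I_set (k - 1) (l - 1)" "ts = us @ [k]" by blast
  then show "ts \<in> I_set k l"
  proof cases
    case 1
    have s: "sorted_wrt (<) ts" "length ts = l" "set ts \<subseteq> {1..k - 2}"
      and par: "\<And>i. i < l \<Longrightarrow> ts ! i mod 2 = (k - 2 + (i + 1) - l) mod 2" using 1 by (auto simp: I_set_def)
    have "ts ! i mod 2 = (k + (i + 1) - l) mod 2" if "i < l" for i
    proof -
      have "ts ! (l - 1) \<in> set ts" using s l by auto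
      hence "ts ! (l - 1) \<le> k - 2" using s by auto
      hence "l \<le> k - 2 + i" by (rule I_set_last_bound[OF 1 that])
      hence eq: "k + (i + 1) - l = (k - 2 + (i + 1) - l) + 2" using k by linarith
      show ?thesis unfolding eq using par[OF that] by simp
    qed
    moreover have "set ts \<subseteq> {1..k}" using s(3) by (meson atLeastatMost_subset_iff diff_le_self order_refl subset_trans)
    ultimately show ?thesis using s(1,2) by (auto simp: I_set_def)
  next
    case 2
    have s: "sorted_wrt (<) us" "length us = l - 1" "set us \<subseteq> {1..k - 1}"
      and par: "\<And>i. i < l - 1 \<Longrightarrow> us ! i mod 2 = (k - 1 + (i + 1) - (l - 1)) mod 2" using 2 by (auto simp: I_set_def)
    have "\<forall>x\<in>set us. x < k" using s(3) k by force
    hence "sorted_wrt (<) ts" using s(1) 2 by (simp add: sorted_wrt_append)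
    moreover have "length ts = l" using s 2 l by simp
    moreover have "set us \<subseteq> {1..k}" using s(3) by (meson atLeastatMost_subset_iff diff_le_self order_refl subset_trans)
    hence "set ts \<subseteq> {1..k}" using 2 k by simp
    moreover have "ts ! i mod 2 = (k + (i + 1) - l) mod 2" if "i < l" for i
    proof (cases "i < l - 1")
      case True
      have eq: "k - 1 + (i + 1) - (l - 1) = k + (i + 1) - l" using k l True by linarith
      have "i < length us" using True s by simp
      hence "ts ! i = us ! i" using 2 by (simp add: nth_append)
      then show ?thesis using par[OF True] unfolding eq by simp
    next
      case False
      hence "i = l - 1" using that by simp
      then show ?thesis using 2 s l by (simp add: nth_append)
    qed
    ultimately show ?thesis by (auto simp: I_set_def)
  qed
qed


lemma G_rec:
  assumes k: "k \<ge> 2" and l: "l \<ge> 1"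
  shows "G a k l = G a (k - 2) l + a k * G a (k - 1) (l - 1)"
proof -
  have disj: "I_set (k - 2) l \<inter> (\<lambda>ts. ts @ [k]) ` I_set (k - 1) (l - 1) = {}"
  proof (rule ccontr)
    assume "I_set (k - 2) l \<inter> (\<lambda>ts. ts @ [k]) ` I_set (k - 1) (l - 1) \<noteq> {}"
    then obtain us where "us @ [k] \<in> I_set (k - 2) l" by blast
    hence "set (us @ [k]) \<subseteq> {1..k - 2}" by (simp add: I_set_def)
    hence "k \<le> k - 2" by simp
    thus False using k by simp
  qed
  have inj: "inj_on (\<lambda>ts. ts @ [k]) (I_set (k - 1) (l - 1))" by (auto simp: inj_on_def)
  obtain l' where l': "l = Suc l'" using l by (cases l) auto
  have "G a k l = G a (k - 2) l + (\<Sum>ts\<in>(\<lambda>ts. ts @ [k]) ` I_set (k - 1) (l - 1). \<Prod>i<l. a (ts ! i))"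
    unfolding G_def I_set_split[OF k l]
    by (rule sum.union_disjoint[OF I_set_finite finite_imageI[OF I_set_finite] disj])
  also have "(\<Sum>ts\<in>(\<lambda>ts. ts @ [k]) ` I_set (k - 1) (l - 1). \<Prod>i<l. a (ts ! i))
      = (\<Sum>us\<in>I_set (k - 1) (l - 1). \<Prod>i<l. a ((us @ [k]) ! i))"
    by (rule sum.reindex[OF inj, unfolded o_def])
  also have "\<dots> = (\<Sum>us\<in>I_set (k - 1) (l - 1). a k * (\<Prod>i<l - 1. a (us ! i)))"
  proof (rule sum.cong[OF refl])
    fix us assume "us \<in> I_set (k - 1) (l - 1)"
    hence len: "length us = l'" using l' by (auto simp: I_set_def)
    show "(\<Prod>i<l. a ((us @ [k]) ! i)) = a k * (\<Prod>i<l - 1. a (us ! i))"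
      unfolding l' using len by (simp add: prod.lessThan_Suc nth_append)
  qed
  also have "\<dots> = a k * G a (k - 1) (l - 1)" by (simp add: G_def sum_distrib_left)
  finally show ?thesis .
qed


fun E :: "nat \<Rightarrow> nat \<Rightarrow> real poly" where
  "E k 0 = (XX * (XX + 1))^(k div 2) * (if odd k then XX else 1)"
| "E k (Suc l) = (if even k then -1 else 1) * E (k - 1) l"

lemma E_shift: "l \<le> k \<Longrightarrow> E (Suc (Suc k)) l = (XX * (XX + 1)) * E k l"
proof (induct l arbitrary: k)
  case 0
  then show ?case by (simp add: algebra_simps)
next
  case (Suc l)
  then obtain k' where k: "k = Suc k'" by (cases k) auto
  have IH: "E (Suc (Suc k')) l = (XX * (XX + 1)) * E k' l" using Suc k by simp
  have "E (Suc (Suc k)) (Suc l) = (if even k then -1 else 1) * E (Suc (Suc k')) l" using k by simp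
  also have "\<dots> = (XX * (XX + 1)) * ((if even k then -1 else 1) * E k' l)" unfolding IH by (simp add: algebra_simps)
  also have "(if even k then -1 else 1) * E k' l = E k (Suc l)" using k by simp
  finally show ?case .
qed

definition Phi :: "(nat \<Rightarrow> nat) \<Rightarrow> nat \<Rightarrow> real poly" where
  "Phi a k = (\<Sum>l\<le>k. of_nat (G a k l) * E k l)"

lemma Ff_Phi: "Ff a k = Phi a k"
proof (induct a k rule: Ff.induct)
  case (1 a)
  then show ?case by (simp add: Phi_def G_0)
next
  case (2 a)
  then show ?case using G_1_1[of a] by (simp add: Phi_def G_0)
next
  case (3 a k)
  let ?e = "(if even k then -1 else 1) :: real poly"
  let ?A = "of_nat (a (Suc (Suc k))) :: real poly"
  have h1: "Phi a (Suc (Suc k)) = of_nat (G a (Suc (Suc k)) 0) * E (Suc (Suc k)) 0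
      + (\<Sum>l\<le>Suc k. of_nat (G a (Suc (Suc k)) (Suc l)) * E (Suc (Suc k)) (Suc l))"
    unfolding Phi_def by (rule sum.atMost_Suc_shift)
  have h2: "(\<Sum>l\<le>Suc k. of_nat (G a (Suc (Suc k)) (Suc l)) * E (Suc (Suc k)) (Suc l))
     = (\<Sum>l\<le>Suc k. of_nat (G a k (Suc l)) * E (Suc (Suc k)) (Suc l))
       + ?e * ?A * (\<Sum>l\<le>Suc k. of_nat (G a (Suc k) l) * E (Suc k) l)"
    by (simp add: G_rec sum.distrib sum_distrib_left algebra_simps)
  have h3: "(\<Sum>l\<le>Suc k. of_nat (G a (Suc k) l) * E (Suc k) l) = Ff a (Suc k)"
    using 3(2) by (simp add: Phi_def)
  have "of_nat (G a (Suc (Suc k)) 0) * E (Suc (Suc k)) 0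
      + (\<Sum>l\<le>Suc k. of_nat (G a k (Suc l)) * E (Suc (Suc k)) (Suc l))
      = (\<Sum>l\<le>Suc (Suc k). of_nat (G a k l) * E (Suc (Suc k)) l)"
    by (subst sum.atMost_Suc_shift) (simp add: G_0)
  also have "\<dots> = (\<Sum>l\<le>k. of_nat (G a k l) * E (Suc (Suc k)) l)"
    by (simp add: G_big)
  also have "\<dots> = (XX * (XX + 1)) * Phi a k"
    unfolding Phi_def sum_distrib_left by (rule sum.cong) (auto simp: E_shift algebra_simps)
  finally have h4: "of_nat (G a (Suc (Suc k)) 0) * E (Suc (Suc k)) 0
      + (\<Sum>l\<le>Suc k. of_nat (G a k (Suc l)) * E (Suc (Suc k)) (Suc l)) = (XX * (XX + 1)) * Phi a k" .
  have "Phi a (Suc (Suc k)) = (XX * (XX + 1)) * Phi a k + ?e * ?A * Ff a (Suc k)"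
    unfolding h1 h2 h3 h4[symmetric] by (simp add: algebra_simps)
  then show ?case using 3 by (simp add: algebra_simps)
qed

lemma degree_XX1: "degree (XX * (XX + 1)) = 2" "lead_coeff (XX * (XX + 1)) = 1"
proof -
  have e: "XX * (XX + 1) = [:0, 1, 1:]" by (simp add: one_pCons)
  show "degree (XX * (XX + 1)) = 2" "lead_coeff (XX * (XX + 1)) = 1" unfolding e by simp_all
qed

lemma E0_deg: "degree (E k 0) = k \<and> lead_coeff (E k 0) = 1"
proof -
  have e: "XX * (XX + 1) = [:0, 1, 1:]" by (simp add: one_pCons)
  have nz: "(XX * (XX + 1)) ^ (k div 2) \<noteq> 0" unfolding e by (auto simp: power_eq_0_iff)
  have d1: "degree ((XX * (XX + 1)) ^ (k div 2)) = 2 * (k div 2)" unfolding e by (simp add: degree_power_eq)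
  have l1: "lead_coeff ((XX * (XX + 1)) ^ (k div 2)) = 1" unfolding e by (simp add: lead_coeff_power)
  show ?thesis
  proof (cases "odd k")
    case True
    have "degree ((XX * (XX + 1)) ^ (k div 2) * XX) = 2 * (k div 2) + 1"
      using nz d1 by (subst degree_mult_eq) auto
    moreover have "lead_coeff ((XX * (XX + 1)) ^ (k div 2) * XX) = 1" unfolding lead_coeff_mult l1 by simp
    ultimately show ?thesis using True by (simp add: odd_two_times_div_two_succ)
  next
    case False
    then show ?thesis using d1 l1 by simp
  qed
qed

lemma E_deg: "degree (E k l) \<le> k - l"
proof (induct l arbitrary: k)
  case 0
  then show ?case using E0_deg by simp
next
  case (Suc l)
  have "degree (E k (Suc l)) = degree (E (k - 1) l)" by simp
  also have "\<dots> \<le> k - 1 - l" by (rule Suc)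
  finally show ?case by simp
qed

lemma sumE_deg: "degree (\<Sum>l\<le>k. of_nat (c l) * E k l) \<le> k"
proof (rule degree_sum_le)
  fix l assume "l \<in> {..k}"
  have "degree (of_nat (c l) * E k l) \<le> degree (of_nat (c l) :: real poly) + degree (E k l)" by (rule degree_mult_le)
  also have "\<dots> \<le> k" using E_deg[of k l] by (simp add: degree_of_nat)
  finally show "degree (of_nat (c l) * E k l) \<le> k" .
qed simp

lemma E_uniq: "(\<Sum>l\<le>k. of_nat (c l) * E k l) = (\<Sum>l\<le>k. of_nat (d l) * E k l) \<Longrightarrow> l \<le> k \<Longrightarrow> c l = d l"
proof (induct k arbitrary: c d l)
  case 0
  hence "(of_nat (c 0) :: real poly) = of_nat (d 0)" by simp
  hence "c 0 = d 0" using of_nat_eq_iff by blast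
  then show ?case using 0 by simp
next
  case (Suc k)
  let ?e = "(if even (Suc k) then -1 else 1) :: real poly"
  have split: "(\<Sum>l\<le>Suc k. of_nat (f l) * E (Suc k) l) = of_nat (f 0) * E (Suc k) 0 + ?e * (\<Sum>l\<le>k. of_nat (f (Suc l)) * E k l)" for f :: "nat \<Rightarrow> nat"
    by (subst sum.atMost_Suc_shift) (simp add: sum_distrib_left algebra_simps)
  have ee: "?e * ?e = 1" by simp
  have c0: "coeff (\<Sum>l\<le>Suc k. of_nat (f l) * E (Suc k) l) (Suc k) = of_nat (f 0)" for f :: "nat \<Rightarrow> nat"
  proof -
    have "coeff (?e * (\<Sum>l\<le>k. of_nat (f (Suc l)) * E k l)) (Suc k) = 0"
    proof -
      have "degree (?e * (\<Sum>l\<le>k. of_nat (f (Suc l)) * E k l)) \<le> degree ?e + k"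
        using sumE_deg[where k=k and c="\<lambda>l. f (Suc l)"] degree_mult_le[of ?e] by (meson add_le_mono order_refl order_trans)
      also have "degree ?e = 0" by simp
      finally show ?thesis by (intro coeff_eq_0) simp
    qed
    moreover have "coeff (of_nat (f 0) * E (Suc k) 0) (Suc k) = of_nat (f 0)"
    proof -
      have "coeff (E (Suc k) 0) (Suc k) = 1" using E0_deg[of "Suc k"] by (metis (no_types))
      thus ?thesis by (simp only: of_nat_poly mult_pCons_left mult_zero_left pCons_0_0 add_0_right coeff_smult mult_1_right)
    qed
    ultimately show ?thesis unfolding split by simp
  qed
  have "coeff (\<Sum>l\<le>Suc k. of_nat (c l) * E (Suc k) l) (Suc k) = coeff (\<Sum>l\<le>Suc k. of_nat (d l) * E (Suc k) l) (Suc k)"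
    by (simp only: Suc.prems(1))
  hence "(of_nat (c 0) :: real) = of_nat (d 0)" unfolding c0 .
  hence cd0: "c 0 = d 0" by simp
  have "?e * (\<Sum>l\<le>k. of_nat (c (Suc l)) * E k l) = ?e * (\<Sum>l\<le>k. of_nat (d (Suc l)) * E k l)"
    using Suc.prems(1) unfolding split cd0 by simp
  hence "?e * ?e * (\<Sum>l\<le>k. of_nat (c (Suc l)) * E k l) = ?e * ?e * (\<Sum>l\<le>k. of_nat (d (Suc l)) * E k l)"
    by (simp only: mult.assoc)
  hence rest: "(\<Sum>l\<le>k. of_nat (c (Suc l)) * E k l) = (\<Sum>l\<le>k. of_nat (d (Suc l)) * E k l)"
    unfolding ee by simp
  show ?case
  proof (cases l)
    case 0
    then show ?thesis using cd0 by simp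
  next
    case (Suc l')
    then show ?thesis using Suc.hyps[OF rest, of l'] Suc.prems(2) by simp
  qed
qed


definition sg :: "nat \<Rightarrow> real" where "sg k = (if odd k then 1 else -1)"

lemma Ff_rec: "Ff a (Suc (Suc k)) = (XX * (XX + 1)) * Ff a k + Polynomial.smult (sg k * of_nat (a (Suc (Suc k)))) (Ff a (Suc k))"
proof -
  have "(if odd k then 1 else -1) * of_nat (a (Suc (Suc k))) * Ff a (Suc k)
      = Polynomial.smult (sg k * of_nat (a (Suc (Suc k)))) (Ff a (Suc k))"
    by (simp add: sg_def of_nat_poly)
  thus ?thesis by simp
qed

lemma sg_nz: "sg k \<noteq> 0" by (simp add: sg_def)

lemma polyXX: "poly (XX * (XX + 1)) 0 = 0" "poly (XX * (XX + 1)) (-1) = 0"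
  "poly (pderiv (XX * (XX + 1))) (-1) = -1"
  by (simp_all add: pderiv_mult pderiv_add pderiv_pCons)

lemma pderiv_Q: "poly (pderiv (XX * (XX + 1) * p)) (-1) = - poly p (-1)"
proof -
  have "poly (pderiv (XX * (XX + 1) * p)) (-1) = poly (XX * (XX + 1)) (-1) * poly (pderiv p) (-1) + poly p (-1) * poly (pderiv (XX * (XX + 1))) (-1)"
    by (simp only: pderiv_mult poly_add poly_mult)
  thus ?thesis by (simp only: polyXX)
qed

lemma Ff_0:
  assumes "\<And>i. 1 \<le> i \<Longrightarrow> i \<le> k \<Longrightarrow> a i > 0"
  shows "poly (Ff a k) 0 \<noteq> 0"
  using assms
proof (induct a k rule: Ff.induct)
  case (1 a)
  then show ?case by simp
next
  case (2 a)
  then show ?case by fastforce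
next
  case (3 a k)
  have "poly (Ff a (Suc k)) 0 \<noteq> 0" using 3 by simp
  moreover have "a (Suc (Suc k)) > 0" using 3 by simp
  ultimately show ?case unfolding Ff_rec using polyXX sg_nz by simp
qed

lemma Ff_m1_a:
  assumes "\<And>i. 1 \<le> i \<Longrightarrow> i \<le> k \<Longrightarrow> a i > 0" and "a 1 \<noteq> 1"
  shows "poly (Ff a k) (-1) \<noteq> 0"
  using assms
proof (induct a k rule: Ff.induct)
  case (1 a)
  then show ?case by simp
next
  case (2 a)
  then show ?case by simp
next
  case (3 a k)
  have "poly (Ff a (Suc k)) (-1) \<noteq> 0" using 3 by simp
  moreover have "a (Suc (Suc k)) > 0" using 3 by simp
  ultimately show ?case unfolding Ff_rec using polyXX sg_nz by simp
qed

lemma Ff_m1_b: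
  assumes "\<And>i. 1 \<le> i \<Longrightarrow> i \<le> k \<Longrightarrow> a i > 0" and "a 1 = 1" and "k \<ge> 1"
  shows "poly (Ff a k) (-1) = 0 \<and> poly (pderiv (Ff a k)) (-1) \<noteq> 0"
  using assms
proof (induct a k rule: Ff.induct)
  case (1 a)
  then show ?case by simp
next
  case (2 a)
  then show ?case by (simp add: pderiv_add pderiv_pCons)
next
  case (3 a k)
  have IH: "poly (Ff a (Suc k)) (-1) = 0 \<and> poly (pderiv (Ff a (Suc k))) (-1) \<noteq> 0" using 3 by simp
  have pos: "a (Suc (Suc k)) > 0" using 3 by simp
  have v: "poly (Ff a (Suc (Suc k))) (-1) = 0" unfolding Ff_rec using polyXX IH by simp
  have d: "poly (pderiv (Ff a (Suc (Suc k)))) (-1) = - poly (Ff a k) (-1) + sg k * of_nat (a (Suc (Suc k))) * poly (pderiv (Ff a (Suc k))) (-1)"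
    unfolding Ff_rec by (simp only: pderiv_add pderiv_smult poly_add poly_smult pderiv_Q)
  show ?case
  proof (cases k)
    case 0
    have "poly (pderiv (Ff a (Suc 0))) (-1) = 1" by (simp add: pderiv_add pderiv_pCons)
    hence "poly (pderiv (Ff a (Suc (Suc k)))) (-1) = -1 - of_nat (a 2)" unfolding d using 0
      by (simp add: sg_def numeral_2_eq_2)
    moreover have "(of_nat (a 2) :: real) \<ge> 0" by simp
    ultimately show ?thesis using v by linarith
  next
    case (Suc j)
    have "poly (Ff a k) (-1) = 0 \<and> poly (pderiv (Ff a k)) (-1) \<noteq> 0"
      by (rule 3(1)) (use 3 Suc in auto)
    then show ?thesis using v d IH pos sg_nz by simp
  qed
qed


lemma Ff_facts:
  assumes pos: "\<And>i. 1 \<le> i \<Longrightarrow> i \<le> k \<Longrightarrow> a i > 0" and k: "k \<ge> 1"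
  shows "Ff a k \<noteq> 0" "order 0 (Ff a k) = 0" "order (-1) (Ff a k) = (if a 1 = 1 then 1 else 0)"
proof -
  have p0: "poly (Ff a k) 0 \<noteq> 0" by (rule Ff_0[where a=a and k=k, OF pos])
  thus nz: "Ff a k \<noteq> 0" by auto
  show "order 0 (Ff a k) = 0" using p0 by (rule order_0I)
  show "order (-1) (Ff a k) = (if a 1 = 1 then 1 else 0)"
  proof (cases "a 1 = 1")
    case True
    have h: "poly (Ff a k) (-1) = 0 \<and> poly (pderiv (Ff a k)) (-1) \<noteq> 0"
      by (rule Ff_m1_b[where a=a and k=k, OF pos True k])
    hence "pderiv (Ff a k) \<noteq> 0" by auto
    have "order (-1) (Ff a k) = Suc (order (-1) (pderiv (Ff a k)))"
      by (rule order_pderiv) (use nz h in auto)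
    also have "order (-1) (pderiv (Ff a k)) = 0" using h by (intro order_0I) auto
    finally show ?thesis using True by simp
  next
    case False
    have "poly (Ff a k) (-1) \<noteq> 0" by (rule Ff_m1_a[where a=a and k=k, OF pos False])
    thus ?thesis using False by (simp add: order_0I)
  qed
qed

lemma CP_form:
  assumes pos: "\<And>i. 1 \<le> i \<Longrightarrow> i \<le> n \<Longrightarrow> a i > 0" and n: "even n" "n \<ge> 2"
  shows "char_poly (thr_adj_mat (thr_seq a n)) = XX^(e0 a n) * (XX+1)^(e1 a n) * Ff a n"
proof -
  have "char_poly (thr_adj_mat (thr_seq a n)) = (XX^(e0 a n) * (XX+1)^(e1 a n)) * fst (red a n)"
    unfolding charpoly_PW using PW_blocks[where a=a and k=n, OF pos] by blast
  also have "fst (red a n) = Ff a n" using red_Ff[of n a] n by simp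
  finally show ?thesis .
qed

lemma XX_eq: "XX = [:- 0, 1:]" "XX + 1 = [:- (- 1), 1:]"
  by (simp_all add: one_pCons)

lemma CP_orders:
  assumes pos: "\<And>i. 1 \<le> i \<Longrightarrow> i \<le> n \<Longrightarrow> a i > 0" and n: "even n" "n \<ge> 2"
  shows "order 0 (char_poly (thr_adj_mat (thr_seq a n))) = e0 a n"
    "order (-1) (char_poly (thr_adj_mat (thr_seq a n))) = e1 a n + (if a 1 = 1 then 1 else 0)"
    "degree (char_poly (thr_adj_mat (thr_seq a n))) = e0 a n + e1 a n + n"
    "char_poly (thr_adj_mat (thr_seq a n)) \<noteq> 0"
proof -
  let ?P = "char_poly (thr_adj_mat (thr_seq a n))"
  have F: "Ff a n \<noteq> 0" "order 0 (Ff a n) = 0" "order (-1) (Ff a n) = (if a 1 = 1 then 1 else 0)"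
    using Ff_facts[where a=a and k=n, OF pos] n by auto
  have nz1: "XX^(e0 a n) \<noteq> 0" by simp
  have nz2: "(XX+1)^(e1 a n) \<noteq> 0" unfolding XX_eq(2) by simp
  have nz12: "XX^(e0 a n) * (XX+1)^(e1 a n) \<noteq> 0" using nz1 nz2 by simp
  have nzP: "XX^(e0 a n) * (XX+1)^(e1 a n) * Ff a n \<noteq> 0" using nz12 F(1) by simp
  have P: "?P = XX^(e0 a n) * (XX+1)^(e1 a n) * Ff a n" by (rule CP_form[where a=a and n=n, OF pos n])
  have o: "order x ?P = order x (XX^(e0 a n)) + order x ((XX+1)^(e1 a n)) + order x (Ff a n)" for x
    unfolding P using nzP nz12 by (simp add: order_mult)
  have o1: "order 0 (XX^(e0 a n)) = e0 a n" unfolding XX_eq(1) by (rule order_power_n_n)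
  have o2: "order (-1) ((XX+1)^(e1 a n)) = e1 a n" unfolding XX_eq(2) by (rule order_power_n_n)
  have o3: "order (-1) (XX^(e0 a n)) = 0" by (rule order_0I) simp
  have o4: "order 0 ((XX+1)^(e1 a n)) = 0" by (rule order_0I) simp
  show "order 0 ?P = e0 a n" using o[of 0] o1 o4 F by simp
  show "order (-1) ?P = e1 a n + (if a 1 = 1 then 1 else 0)" using o[of "-1"] o2 o3 F by simp
  have "degree ?P = length (thr_seq a n)"
    using degree_monic_char_poly[of "thr_adj_mat (thr_seq a n)" "length (thr_seq a n)"]
    by (simp add: thr_adj_mat_def)
  also have "\<dots> = e0 a n + e1 a n + n" unfolding length_thr_seq using e01_sum[where a=a and k=n, OF pos] by simp
  finally show "degree ?P = e0 a n + e1 a n + n" .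
  show "?P \<noteq> 0" using P nzP by simp
qed

lemma thr_sym: "thr_adj_mat s \<in> carrier_mat (length s) (length s)"
  "\<And>i j. i < length s \<Longrightarrow> j < length s \<Longrightarrow> thr_adj_mat s $$ (i,j) = thr_adj_mat s $$ (j,i)"
  by (auto simp: thr_adj_mat_def thr_adj_def)

lemma cospec_eq:
  assumes "cospectral (thr_adj_mat s) (thr_adj_mat s')"
  shows "char_poly (thr_adj_mat s) = char_poly (thr_adj_mat s')"
proof -
  obtain rs where rs: "char_poly (thr_adj_mat s) = (\<Prod>r\<leftarrow>rs. [:-r, 1:])"
    using sym_real_split[OF thr_sym] by blast
  obtain ss where ss: "char_poly (thr_adj_mat s') = (\<Prod>r\<leftarrow>ss. [:-r, 1:])"
    using sym_real_split[OF thr_sym] by blast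
  show ?thesis unfolding rs ss
    by (rule linprod_eq) (use assms in \<open>simp add: cospectral_def spec_mult_def rs[symmetric] ss[symmetric]\<close>)
qed

theorem lemma2:
  fixes a b :: "nat \<Rightarrow> nat" and n m :: nat
  assumes "even n" "n \<ge> 2" "even m" "m \<ge> 2"
    and "\<And>i. 1 \<le> i \<Longrightarrow> i \<le> n \<Longrightarrow> a i > 0"
    and "\<And>j. 1 \<le> j \<Longrightarrow> j \<le> m \<Longrightarrow> b j > 0"
    and "cospectral (thr_adj_mat (thr_seq a n)) (thr_adj_mat (thr_seq b m))"
  shows "n = m \<and> (\<forall>l\<le>n. gamma a n l = gamma b n l)"
proof -
  let ?Pa = "char_poly (thr_adj_mat (thr_seq a n))"
  let ?Pb = "char_poly (thr_adj_mat (thr_seq b m))"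
  have eq: "?Pa = ?Pb" by (rule cospec_eq[OF assms(7)])
  note A = CP_orders[where a=a and n=n, OF assms(5) assms(1,2)]
  note B = CP_orders[where a=b and n=m, OF assms(6) assms(3,4)]
  have h0: "e0 a n = e0 b m" using A(1) B(1) eq by simp
  have h1: "e1 a n + (if a 1 = 1 then 1 else 0) = e1 b m + (if b 1 = 1 then 1 else 0)" using A(2) B(2) eq by simp
  have hd: "e0 a n + e1 a n + n = e0 b m + e1 b m + m" using A(3) B(3) eq by simp
  have nsum: "n + (if b 1 = 1 then 1 else 0) = m + (if a 1 = 1 then 1 else 0)" using h0 h1 hd by simp
  have nm: "n = m"
  proof -
    have "n + (if b 1 = 1 then 1 else 0) = m + (if a 1 = 1 then 1 else 0)" using h0 h1 hd by simp
    thus ?thesis using assms(1,3) by (auto split: if_splits)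
  qed
  have e1: "e1 a n = e1 b m" using h1 nm assms(1,3) nsum by (auto split: if_splits)
  have F1: "XX^(e0 a n) * (XX+1)^(e1 a n) * Ff a n = XX^(e0 b m) * (XX+1)^(e1 b m) * Ff b m"
  proof -
    have Ca: "?Pa = XX^(e0 a n) * (XX+1)^(e1 a n) * Ff a n" by (rule CP_form[where a=a and n=n, OF assms(5) assms(1,2)])
    have Cb: "?Pb = XX^(e0 b m) * (XX+1)^(e1 b m) * Ff b m" by (rule CP_form[where a=b and n=m, OF assms(6) assms(3,4)])
    show ?thesis using Ca Cb eq by metis
  qed
  have Q: "XX^(e0 a n) * (XX+1)^(e1 a n) = XX^(e0 b m) * (XX+1)^(e1 b m)" by (simp only: h0 e1)
  have nzQ: "XX^(e0 b m) * (XX+1)^(e1 b m) \<noteq> 0" unfolding XX_eq(2) by simp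
  have "Ff a n = Ff b m" using F1 unfolding Q mult_left_cancel[OF nzQ] .
  hence FF: "Ff a n = Ff b n" using nm by simp
  have "(\<Sum>l\<le>n. of_nat (G a n l) * E n l) = (\<Sum>l\<le>n. of_nat (G b n l) * E n l)"
    using FF unfolding Ff_Phi Phi_def .
  hence "\<forall>l\<le>n. G a n l = G b n l" using E_uniq by blast
  thus ?thesis using nm by (simp add: gamma_G)
qed

end
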